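(* Let $s>1$ be an integer. Then for every positive integer $n$, $$\tau_s(n)=\zeta(s)\sum_{r=1}^{\infty}\frac{c_r^{s}(n)}{r^s},$$ where the series converges absolutely.
   Context: For $s\in\mathbb{N}$ and integers $a,b$, $(a,b)_s$ denotes the largest $d^s$ with $d\in\mathbb{N}$ such that $d^s\mid a$ and $d^s\mid b$. The Cohen–Ramanujan sum is defined for $r,s\in\mathbb{N}$ and $n\in\mathbb{Z}$ by $$c_r^{s}(n)=\sum_{\substack{h=1\\ (h,r^s)_s=1}}^{r^s} e^{2\pi i n h/r^s}.$$ For $n\in\mathbb{N}$, $\tau_s(n)$ is the number of positive integers $d$ such that $d^s\mid n$. $\zeta$ denotes the Riemann zeta function. *)

theory Defs
  imports "HOL-Analysis.Analysis"
begin

text \<open>(a,b)_s: the largest d^s (d a positive integer) dividing both a and b.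
  Only used with b = r^s > 0, where the set is finite and nonempty.\<close>
definition gcd_pow :: "nat \<Rightarrow> int \<Rightarrow> int \<Rightarrow> int" where
  "gcd_pow s a b = Max {(int d) ^ s | d. d \<ge> 1 \<and> (int d) ^ s dvd a \<and> (int d) ^ s dvd b}"

definition cohen_ramanujan :: "nat \<Rightarrow> nat \<Rightarrow> int \<Rightarrow> complex" where
  "cohen_ramanujan s r n =
     (\<Sum>h \<in> {h \<in> {1..r ^ s}. gcd_pow s (int h) (int (r ^ s)) = 1}.
        exp (2 * pi * \<i> * of_int n * of_nat h / of_nat (r ^ s)))"

definition tau_pow :: "nat \<Rightarrow> nat \<Rightarrow> nat" where
  "tau_pow s n = card {d :: nat. d > 0 \<and> d ^ s dvd n}"

definition zeta_nat :: "nat \<Rightarrow> real" where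
  "zeta_nat s = (\<Sum>k. 1 / (real (Suc k)) ^ s)"

end

theory Submission
  imports Defs "HOL-Computational_Algebra.Primes"
begin


lemma alt_sum_Pow:
  assumes "finite A"
  shows "(\<Sum>T\<in>Pow A. (-1::complex) ^ card T) = (if A = {} then 1 else 0)"
  using assms
proof (induction A rule: finite_induct)
  case empty then show ?case by simp
next
  case (insert a A)
  have "(\<Sum>T\<in>Pow (insert a A). (-1::complex) ^ card T)
      = (\<Sum>T\<in>Pow A. (-1::complex) ^ card T) + (\<Sum>T\<in>insert a ` Pow A. (-1::complex) ^ card T)"
    unfolding Pow_insert
    by (rule sum.union_disjoint) (use insert in auto)
  also have "(\<Sum>T\<in>insert a ` Pow A. (-1::complex) ^ card T) = (\<Sum>T\<in>Pow A. (-1::complex) ^ card (insert a T))"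
    by (rule sum.reindex_cong[where l="insert a"]) (use insert in \<open>auto simp: inj_on_def\<close>)
  also have "\<dots> = - (\<Sum>T\<in>Pow A. (-1::complex) ^ card T)"
  proof -
    have "(-1::complex) ^ card (insert a T) = - ((-1) ^ card T)" if "T \<subseteq> A" for T
    proof -
      have "finite T" using that insert finite_subset by blast
      moreover have "a \<notin> T" using that insert by blast
      ultimately show ?thesis by simp
    qed
    then show ?thesis by (simp add: sum_negf[symmetric])
  qed
  finally show ?case by simp
qed

lemma prod_primes_dvd_iff:
  fixes x :: nat
  assumes "finite T" "\<forall>p\<in>T. prime p" "x > 0"
  shows "(\<Prod>T dvd x) \<longleftrightarrow> T \<subseteq> prime_factors x"
  using assms
proof (induction T rule: finite_induct)
  case empty then show ?case by simp
next
  case (insert p T)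
  have cop: "coprime p (\<Prod>T)"
    using insert by (metis prime_dvd_prod_iff primes_dvd_imp_eq prime_imp_coprime insert_iff)
  have "(\<Prod>(insert p T) dvd x) \<longleftrightarrow> p dvd x \<and> \<Prod>T dvd x"
    using insert cop by (auto intro: divides_mult dest: dvd_mult_left dvd_mult_right)
  then show ?case using insert by (auto simp: prime_factors_dvd)
qed


lemma prod_T_dvd:
  fixes r :: nat
  assumes "r > 0" "T \<subseteq> prime_factors r"
  shows "\<Prod>T dvd r" "\<Prod>T > 0"
proof -
  have fin: "finite T" using assms finite_subset by blast
  have pr: "\<forall>p\<in>T. prime p" using assms by auto
  show "\<Prod>T dvd r" using prod_primes_dvd_iff[OF fin pr assms(1)] assms by simp
  show "\<Prod>T > 0" using pr by (metis fin prime_gt_0_nat prod_pos)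
qed

lemma mobius_subsets:
  fixes F G :: "nat \<Rightarrow> complex" and r :: nat
  assumes r: "r > 0" and hG: "\<And>m. m dvd r \<Longrightarrow> G m = (\<Sum>d | d dvd m. F d)"
  shows "F r = (\<Sum>T\<in>Pow (prime_factors r). (-1) ^ card T * G (r div \<Prod>T))"
proof -
  let ?P = "prime_factors r"
  let ?D = "{d. d dvd r}"
  have finD: "finite ?D" using r by simp
  have key: "(\<Sum>T\<in>Pow ?P. if d dvd r div \<Prod>T then (-1::complex) ^ card T else 0) = (if d = r then 1 else 0)"
    if d: "d dvd r" for d
  proof -
    have d0: "d > 0" using d r by (metis dvd_0_left_iff gr0I)
    have rd0: "r div d > 0" using d r d0 by (metis dvd_div_eq_0_iff neq0_conv)
    have eqset: "{T\<in>Pow ?P. d dvd r div \<Prod>T} = Pow (prime_factors (r div d))"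
    proof (intro equalityI subsetI)
      fix T assume T: "T \<in> {T\<in>Pow ?P. d dvd r div \<Prod>T}"
      then have TP: "T \<subseteq> ?P" and dd: "d dvd r div \<Prod>T" by auto
      have "\<Prod>T dvd r" "\<Prod>T > 0" using prod_T_dvd[OF r TP] by auto
      then have "d * \<Prod>T dvd r" using dd dvd_div_iff_mult[of "\<Prod>T" r d] by simp
      then have "\<Prod>T dvd r div d" using d0 d dvd_div_iff_mult[of d r "\<Prod>T"] by (simp add: mult.commute)
      then show "T \<in> Pow (prime_factors (r div d))"
        using prod_primes_dvd_iff[of T "r div d"] rd0 TP finite_subset[OF TP] by auto
    next
      fix T assume T: "T \<in> Pow (prime_factors (r div d))"
      have sub: "prime_factors (r div d) \<subseteq> ?P"
        using rd0 r by (intro dvd_prime_factors) (auto simp: div_dvd_iff_mult d0 d)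
      then have TP: "T \<subseteq> ?P" using T by auto
      have "\<Prod>T dvd r div d"
        using prod_primes_dvd_iff[of T "r div d"] rd0 TP T finite_subset[OF TP] by auto
      then have "d * \<Prod>T dvd r" using d0 d dvd_div_iff_mult[of d r "\<Prod>T"] by (simp add: mult.commute)
      moreover have "\<Prod>T > 0" "\<Prod>T dvd r" using prod_T_dvd[OF r TP] by auto
      ultimately have "d dvd r div \<Prod>T" using dvd_div_iff_mult[of "\<Prod>T" r d] by simp
      then show "T \<in> {T\<in>Pow ?P. d dvd r div \<Prod>T}" using TP by auto
    qed
    have "(\<Sum>T\<in>Pow ?P. if d dvd r div \<Prod>T then (-1::complex) ^ card T else 0)
        = (\<Sum>T\<in>{T\<in>Pow ?P. d dvd r div \<Prod>T}. (-1::complex) ^ card T)"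
      by (rule sum.inter_filter[symmetric]) simp
    also have "\<dots> = (\<Sum>T\<in>Pow (prime_factors (r div d)). (-1::complex) ^ card T)"
      using eqset by simp
    also have "\<dots> = (if prime_factors (r div d) = {} then 1 else 0)"
      by (rule alt_sum_Pow) simp
    also have "(prime_factors (r div d) = {}) \<longleftrightarrow> d = r"
    proof -
      have "(prime_factors (r div d) = {}) \<longleftrightarrow> r div d = 1"
        using rd0 by (auto simp: prime_factorization_empty_iff)
      also have "\<dots> \<longleftrightarrow> d = r" using d d0 r
        by (metis div_self dvd_mult_div_cancel nat_mult_1_right neq0_conv)
      finally show ?thesis .
    qed
    finally show ?thesis .
  qed
  have "(\<Sum>T\<in>Pow ?P. (-1) ^ card T * G (r div \<Prod>T))
      = (\<Sum>T\<in>Pow ?P. \<Sum>d\<in>?D. if d dvd r div \<Prod>T then (-1) ^ card T * F d else 0)"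
  proof (rule sum.cong[OF refl])
    fix T assume T: "T \<in> Pow ?P"
    have "\<Prod>T dvd r" "\<Prod>T > 0" using prod_T_dvd[of r T] r T by auto
    then have dv: "r div \<Prod>T dvd r" by (metis dvd_div_iff_mult dvd_refl mult.commute dvd_mult_div_cancel dvd_triv_left)
    have sub: "{d. d dvd r div \<Prod>T} \<subseteq> ?D" using dv dvd_trans by blast
    have "G (r div \<Prod>T) = (\<Sum>d | d dvd r div \<Prod>T. F d)" using hG dv by blast
    also have "\<dots> = (\<Sum>d\<in>?D. if d dvd r div \<Prod>T then F d else 0)"
      using sub finD by (simp add: sum.inter_filter[symmetric] Int_absorb1 Collect_conj_eq[symmetric])
        (metis (no_types, lifting) Collect_cong sub mem_Collect_eq subset_eq)
    finally show "(-1) ^ card T * G (r div \<Prod>T) = (\<Sum>d\<in>?D. if d dvd r div \<Prod>T then (-1) ^ card T * F d else 0)"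
      by (simp add: sum_distrib_left) (rule sum.cong, auto)
  qed
  also have "\<dots> = (\<Sum>d\<in>?D. \<Sum>T\<in>Pow ?P. if d dvd r div \<Prod>T then (-1) ^ card T * F d else 0)"
    by (rule sum.swap)
  also have "\<dots> = (\<Sum>d\<in>?D. F d * (\<Sum>T\<in>Pow ?P. if d dvd r div \<Prod>T then (-1::complex) ^ card T else 0))"
    by (simp add: sum_distrib_left) (intro sum.cong, auto)
  also have "\<dots> = (\<Sum>d\<in>?D. F d * (if d = r then 1 else 0))"
    by (rule sum.cong[OF refl]) (simp add: key)
  also have "\<dots> = (\<Sum>d\<in>?D. if d = r then F d else 0)"
    by (rule sum.cong) auto
  also have "\<dots> = F r" using finD by (simp add: sum.delta)
  finally show ?thesis by simp
qed


lemma div_inj_helper: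
  fixes a b r :: nat
  assumes "a dvd r" "b dvd r" "r > 0" "r div a = r div b"
  shows "a = b"
proof -
  have "r = (r div a) * a" "r = (r div b) * b" using assms(1,2) by simp_all
  moreover have "r div a > 0" using assms by (metis dvd_div_eq_0_iff neq0_conv)
  ultimately show ?thesis using assms(4) by (metis mult_left_cancel neq0_conv)
qed

lemma mobius_bound:
  fixes F G :: "nat \<Rightarrow> complex" and r :: nat and D :: "nat set" and B :: real
  assumes r: "r > 0" and hG: "\<And>m. m dvd r \<Longrightarrow> G m = (\<Sum>d | d dvd m. F d)"
    and finD: "finite D" and hB: "\<And>x. x > 0 \<Longrightarrow> norm (G x) \<le> (if x \<in> D then B else 0)"
    and B0: "B \<ge> 0"
  shows "norm (F r) \<le> B * card D"
proof -
  let ?P = "prime_factors r"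
  let ?f = "\<lambda>T. r div \<Prod>T"
  have finP: "finite (Pow ?P)" by simp
  have pos: "?f T > 0" if "T \<in> Pow ?P" for T
    using prod_T_dvd[of r T] r that by (auto simp: div_greater_zero_iff dvd_imp_le)
  have "norm (F r) = norm (\<Sum>T\<in>Pow ?P. (-1) ^ card T * G (?f T))"
    using mobius_subsets[OF r hG] by simp
  also have "\<dots> \<le> (\<Sum>T\<in>Pow ?P. norm ((-1) ^ card T * G (?f T)))"
    by (rule norm_sum)
  also have "\<dots> \<le> (\<Sum>T\<in>Pow ?P. if ?f T \<in> D then B else 0)"
    by (rule sum_mono) (use hB pos in \<open>auto simp: norm_mult norm_power\<close>)
  also have "\<dots> = B * card {T\<in>Pow ?P. ?f T \<in> D}"
    using finP by (simp add: sum.inter_filter[symmetric])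
  also have "card {T\<in>Pow ?P. ?f T \<in> D} \<le> card D"
  proof (rule card_inj_on_le[OF _ _ finD])
    show "inj_on ?f {T\<in>Pow ?P. ?f T \<in> D}"
    proof (rule inj_onI)
      fix T1 T2 assume T1: "T1 \<in> {T\<in>Pow ?P. ?f T \<in> D}" and T2: "T2 \<in> {T\<in>Pow ?P. ?f T \<in> D}"
        and eq: "?f T1 = ?f T2"
      have d1: "\<Prod>T1 dvd r" and d2: "\<Prod>T2 dvd r" using prod_T_dvd[of r] r T1 T2 by auto
      have "\<Prod>T1 = \<Prod>T2"
        using eq d1 d2 r by (metis div_inj_helper)
      moreover have "inj_on Prod (Pow ?P)"
        by (rule inj_on_Prod_primes) (auto dest: finite_subset)
      ultimately show "T1 = T2" using T1 T2 by (auto dest: inj_onD)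
    qed
  qed auto
  then have "B * card {T\<in>Pow ?P. ?f T \<in> D} \<le> B * card D"
    using B0 by (intro mult_left_mono) auto
  finally show ?thesis .
qed



definition cs :: "nat \<Rightarrow> nat \<Rightarrow> nat \<Rightarrow> bool" where
  "cs s r h \<longleftrightarrow> (\<forall>d. d dvd r \<and> d ^ s dvd h \<longrightarrow> d = 1)"

lemma gcd_pow_eq_1_iff:
  assumes s: "s > 0" and r: "r > 0" and h: "h > 0"
  shows "gcd_pow s (int h) (int (r ^ s)) = 1 \<longleftrightarrow> cs s r h"
proof -
  let ?S = "{(int d) ^ s | d. d \<ge> 1 \<and> (int d) ^ s dvd int h \<and> (int d) ^ s dvd int (r ^ s)}"
  let ?A = "{d. d \<ge> 1 \<and> d ^ s dvd h \<and> d dvd r}"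
  have S: "?S = (\<lambda>d. int (d ^ s)) ` ?A"
  proof -
    have "(int d) ^ s dvd int h \<longleftrightarrow> d ^ s dvd h" for d
      by (metis of_nat_dvd_iff of_nat_power)
    moreover have "(int d) ^ s dvd int (r ^ s) \<longleftrightarrow> d dvd r" for d
      using s by (metis of_nat_dvd_iff of_nat_power pow_divides_pow_iff)
    ultimately show ?thesis by (auto simp: of_nat_power)
  qed
  have finA: "finite ?A" by (rule finite_subset[of _ "{..r}"]) (use r in \<open>auto dest: dvd_imp_le\<close>)
  have oneA: "1 \<in> ?A" by simp
  have finS: "finite ?S" using S finA by simp
  have oneS: "1 \<in> ?S" using S oneA by force
  have "gcd_pow s (int h) (int (r ^ s)) = Max ?S" unfolding gcd_pow_def by simp
  then have "gcd_pow s (int h) (int (r ^ s)) = 1 \<longleftrightarrow> (\<forall>x\<in>?S. x \<le> 1)"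
    using finS oneS by (metis (no_types, lifting) Max_ge Max_in empty_iff antisym Max_le_iff)
  also have "\<dots> \<longleftrightarrow> (\<forall>d\<in>?A. d ^ s \<le> 1)" unfolding S
  proof -
    have "int (d ^ s) \<le> 1 \<longleftrightarrow> d ^ s \<le> 1" for d by linarith
    then show "(\<forall>x\<in>(\<lambda>d. int (d ^ s)) ` ?A. x \<le> 1) = (\<forall>d\<in>?A. d ^ s \<le> 1)" by auto
  qed
  also have "\<dots> \<longleftrightarrow> (\<forall>d\<in>?A. d = 1)"
  proof -
    have "d ^ s \<le> 1 \<longleftrightarrow> d = 1" if "d \<ge> 1" for d :: nat
    proof
      assume "d ^ s \<le> 1"
      moreover have "d \<le> d ^ s" using that s by (simp add: self_le_power)
      ultimately show "d = 1" using that by linarith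
    qed simp
    then show ?thesis by auto
  qed
  also have "\<dots> \<longleftrightarrow> cs s r h"
  proof -
    have "d \<ge> 1" if "d dvd r" for d using that r by (cases d) auto
    then show ?thesis unfolding cs_def by auto
  qed
  finally show ?thesis .
qed


lemma cr_alt:
  assumes s: "s > 0" and r: "r > 0"
  shows "cohen_ramanujan s r n =
    (\<Sum>h\<in>{h\<in>{1..r^s}. cs s r h}. exp (2 * pi * \<i> * of_int n * of_nat h / of_nat (r ^ s)))"
proof -
  have "{h \<in> {1..r ^ s}. gcd_pow s (int h) (int (r ^ s)) = 1} = {h\<in>{1..r^s}. cs s r h}"
    using gcd_pow_eq_1_iff[OF s r] by auto
  then show ?thesis unfolding cohen_ramanujan_def by simp
qed

lemma lcm_pow_nat: "lcm (a ^ s) (b ^ s) = (lcm a b) ^ s" for a b :: nat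
  by (metis lcm_eq_0_iff lcm_mult_unit2 power_mult_distrib lcm_nat_def power_0 lcm_1_iff_nat
        gcd_exp prod_gcd_lcm_nat div_mult_self1_is_m gcd_eq_0_iff power_eq_0_iff
        gcd_pos_nat nat_mult_eq_cancel1 mult.commute)


lemma Emax:
  fixes m h s :: nat
  assumes m: "m > 0" and h: "h > 0"
  defines "E \<equiv> Max {d. d dvd m \<and> d ^ s dvd h}"
  shows "E dvd m" "E ^ s dvd h" "\<And>d. d dvd m \<Longrightarrow> d ^ s dvd h \<Longrightarrow> d dvd E"
proof -
  let ?A = "{d. d dvd m \<and> d ^ s dvd h}"
  have finA: "finite ?A" by (rule finite_subset[of _ "{..m}"]) (use m in \<open>auto dest: dvd_imp_le\<close>)
  have "1 \<in> ?A" by simp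
  then have EA: "E \<in> ?A" unfolding E_def using finA Max_in by blast
  then show "E dvd m" "E ^ s dvd h" by auto
  fix d assume d: "d dvd m" "d ^ s dvd h"
  let ?L = "lcm d E"
  have "?L dvd m" using d EA by auto
  moreover have "?L ^ s dvd h" using d EA by (metis lcm_pow_nat lcm_least mem_Collect_eq)
  ultimately have "?L \<in> ?A" by simp
  then have "?L \<le> E" unfolding E_def using finA by simp
  moreover have "E dvd ?L" by simp
  moreover have "?L > 0" using d EA m by (metis dvd_0_left_iff lcm_pos_nat mem_Collect_eq neq0_conv)
  ultimately have "?L = E" by (meson dvd_imp_le le_antisym)
  then show "d dvd E" by (metis dvd_lcm1)
qed


lemma sum_divisors_cr:
  assumes s: "s > 0" and m: "m > 0"
  shows "(\<Sum>h\<in>{1..m^s}. exp (2 * pi * \<i> * of_int n * of_nat h / of_nat (m ^ s)))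
       = (\<Sum>d | d dvd m. cohen_ramanujan s d n)"
proof -
  define E where "E h = Max {d. d dvd m \<and> d ^ s dvd h}" for h
  define f where "f h = exp (2 * pi * \<i> * of_int n * of_nat h / of_nat (m ^ s))" for h
  have EP1: "E h dvd m" if "h > 0" for h
    using Emax(1)[OF m that, of s] unfolding E_def by blast
  have EP2: "E h ^ s dvd h" if "h > 0" for h
    using Emax(2)[OF m that, of s] unfolding E_def by blast
  have EP3: "d dvd E h" if "h > 0" "d dvd m" "d ^ s dvd h" for h d
    using Emax(3)[OF m that(1) that(2,3)] unfolding E_def by blast
  note EP = EP1 EP2 EP3
  have finM: "finite {d. d dvd m}" using m by simp
  have grp: "(\<Sum>h\<in>{1..m^s}. f h) = (\<Sum>e\<in>{d. d dvd m}. \<Sum>h\<in>{h. h\<in>{1..m^s} \<and> E h = e}. f h)"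
    by (rule sum.group[symmetric]) (use finM EP in auto)
  have piece: "(\<Sum>h\<in>{h. h\<in>{1..m^s} \<and> E h = e}. f h) = cohen_ramanujan s (m div e) n"
    if e: "e dvd m" for e
  proof -
    define k where "k = m div e"
    have e0: "e > 0" using e m by (metis dvd_0_left_iff neq0_conv)
    have mk: "m = e * k" unfolding k_def using e by simp
    have k0: "k > 0" using mk m by simp
    have es0: "e ^ s > 0" using e0 by simp
    have mpow: "m ^ s = e ^ s * k ^ s" using mk by (simp add: power_mult_distrib)
    have set: "{h. h\<in>{1..m^s} \<and> E h = e} = (\<lambda>h'. e ^ s * h') ` {h\<in>{1..k^s}. cs s k h}"
    proof (intro equalityI subsetI)
      fix h assume "h \<in> {h. h\<in>{1..m^s} \<and> E h = e}"
      then have h1: "1 \<le> h" "h \<le> m^s" and Eh: "E h = e" by auto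
      have "e ^ s dvd h" using EP(2)[of h] h1 Eh by auto
      then obtain h' where hh: "h = e ^ s * h'" by (auto simp: dvd_def)
      have h'1: "h' \<ge> 1" using h1 hh by (cases h') auto
      have "e ^ s * h' \<le> e ^ s * k ^ s" using h1 hh mpow by simp
      then have h'2: "h' \<le> k ^ s" using es0 by (meson mult_le_cancel1)
      have "cs s k h'" unfolding cs_def
      proof (intro allI impI)
        fix d assume d: "d dvd k \<and> d ^ s dvd h'"
        have "e * d dvd m" using d mk by simp
        moreover have "(e * d) ^ s dvd h" using d hh by (simp add: power_mult_distrib)
        ultimately have "e * d dvd e * 1" using EP(3)[of h "e * d"] h1 Eh by simp
        then have "d dvd 1" using e0 nat_mult_dvd_cancel1 by blast
        then show "d = 1" by simp
      qed
      then show "h \<in> (\<lambda>h'. e ^ s * h') ` {h\<in>{1..k^s}. cs s k h}"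
        using hh h'1 h'2 by auto
    next
      fix h assume "h \<in> (\<lambda>h'. e ^ s * h') ` {h\<in>{1..k^s}. cs s k h}"
      then obtain h' where hh: "h = e ^ s * h'" and h'1: "1 \<le> h'" "h' \<le> k ^ s" and csk: "cs s k h'"
        by auto
      have h1: "1 \<le> h" using hh h'1 es0 by (simp add: Suc_le_eq)
      have h2: "h \<le> m ^ s" using hh h'1 mpow by simp
      have "e dvd E h" using EP(3)[of h e] h1 e hh e0 by simp
      then obtain t where t: "E h = e * t" by (auto simp: dvd_def)
      have "e * t dvd e * k" using EP(1)[of h] h1 t mk e0 by simp
      then have tk: "t dvd k" using e0 nat_mult_dvd_cancel1 by blast
      have "(e * t) ^ s dvd e ^ s * h'" using EP(2)[of h] h1 t hh e0 by simp
      then have "e ^ s * t ^ s dvd e ^ s * h'" by (simp only: power_mult_distrib)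
      then have "t ^ s dvd h'" using es0 nat_mult_dvd_cancel1 by blast
      then have "t = 1" using csk tk unfolding cs_def by blast
      then have "E h = e" using t by simp
      then show "h \<in> {h. h\<in>{1..m^s} \<and> E h = e}" using h1 h2 by simp
    qed
    have inj: "inj_on (\<lambda>h'. e ^ s * h') {h\<in>{1..k^s}. cs s k h}"
      using es0 by (auto simp: inj_on_def)
    have "(\<Sum>h\<in>{h. h\<in>{1..m^s} \<and> E h = e}. f h) = (\<Sum>h'\<in>{h\<in>{1..k^s}. cs s k h}. f (e ^ s * h'))"
      unfolding set by (subst sum.reindex[OF inj]) simp
    also have "\<dots> = (\<Sum>h'\<in>{h\<in>{1..k^s}. cs s k h}. exp (2 * pi * \<i> * of_int n * of_nat h' / of_nat (k ^ s)))"
    proof (rule sum.cong[OF refl])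
      fix h' :: nat
      have "of_nat (e ^ s) \<noteq> (0::complex)" using es0 by simp
      then have "2 * pi * \<i> * of_int n * of_nat (e ^ s * h') / of_nat (m ^ s)
               = 2 * pi * \<i> * of_int n * of_nat h' / (of_nat (k ^ s) :: complex)"
        unfolding mpow using e0 by (simp add: field_simps)
      then show "f (e ^ s * h') = exp (2 * pi * \<i> * of_int n * of_nat h' / of_nat (k ^ s))"
        unfolding f_def by simp
    qed
    also have "\<dots> = cohen_ramanujan s k n" using cr_alt[OF s k0] by simp
    finally show ?thesis unfolding k_def .
  qed
  have "(\<Sum>h\<in>{1..m^s}. f h) = (\<Sum>e\<in>{d. d dvd m}. cohen_ramanujan s (m div e) n)"
    using grp piece by simp
  also have "\<dots> = (\<Sum>d\<in>{d. d dvd m}. cohen_ramanujan s d n)"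
  proof (rule sum.reindex_bij_witness[of _ "\<lambda>d. m div d" "\<lambda>d. m div d"])
    fix a assume "a \<in> {d. d dvd m}"
    then show "m div (m div a) = a" "m div a \<in> {d. d dvd m}"
      using m by (auto simp: div_div_eq_right)
  next
    fix a assume "a \<in> {d. d dvd m}"
    then show "m div (m div a) = a" "m div a \<in> {d. d dvd m}"
      using m by (auto simp: div_div_eq_right)
  qed simp
  finally show ?thesis unfolding f_def by simp
qed



lemma root_sum:
  fixes q :: nat and n :: int
  assumes q: "q > 0"
  shows "(\<Sum>h\<in>{1..q}. exp (2 * pi * \<i> * of_int n * of_nat h / of_nat q))
       = (if int q dvd n then of_nat q else 0)"
proof -
  define w where "w = 2 * pi * \<i> * of_int n / (of_nat q :: complex)"
  define z where "z = exp w"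
  have trm: "exp (2 * pi * \<i> * of_int n * of_nat h / of_nat q) = z ^ h" for h :: nat
  proof -
    have "2 * pi * \<i> * of_int n * of_nat h / of_nat q = of_nat h * w" unfolding w_def by simp
    then show ?thesis unfolding z_def by (simp add: exp_of_nat_mult)
  qed
  have zq: "z ^ q = 1"
  proof -
    have "z ^ q = exp (of_nat q * w)" unfolding z_def by (simp add: exp_of_nat_mult)
    also have "of_nat q * w = 2 * of_int n * pi * \<i>" unfolding w_def using q by simp
    also have "exp \<dots> = 1" by (rule exp_integer_2pi) simp
    finally show ?thesis .
  qed
  have S: "(\<Sum>h\<in>{1..q}. exp (2 * pi * \<i> * of_int n * of_nat h / of_nat q)) = (\<Sum>h=1..q. z ^ h)"
    by (rule sum.cong[OF refl], rule trm)
  have "(\<Sum>h=1..q. z ^ h) = (if int q dvd n then of_nat q else 0)"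
  proof (cases "int q dvd n")
    case True
    then obtain k where k: "n = int q * k" by (auto simp: dvd_def)
    have "w = 2 * of_int k * pi * \<i>" unfolding w_def k using q by simp
    moreover have "exp (2 * of_int k * pi * \<i>) = 1" by (rule exp_integer_2pi) simp
    ultimately have "z = 1" unfolding z_def by simp
    then show ?thesis using True by simp
  next
    case False
    have "z \<noteq> 1"
    proof
      assume "z = 1"
      then obtain j :: int where j: "Im w = of_int (2 * j) * pi" unfolding z_def exp_eq_1 by blast
      have "Im w = 2 * pi * of_int n / of_nat q" unfolding w_def by simp
      with j have "2 * pi * of_int n / of_nat q = of_int (2 * j) * pi" by simp
      then have "real_of_int n = of_int j * of_nat q" using q by (simp add: field_simps)
      then have "n = j * int q" by (metis of_int_eq_iff of_int_mult of_int_of_nat_eq)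
      then show False using False by simp
    qed
    have "(1 - z) * (\<Sum>h=1..q. z ^ h) = z ^ 1 - z ^ Suc q"
      using q by (intro sum_gp_multiplied) simp
    also have "\<dots> = 0" using zq by simp
    finally have "(\<Sum>h=1..q. z ^ h) = 0" using \<open>z \<noteq> 1\<close> by simp
    then show ?thesis using False by simp
  qed
  then show ?thesis unfolding S .
qed


lemma cr_bound:
  fixes s n r :: nat
  assumes s: "s > 0" and n: "n > 0" and r: "r > 0"
  shows "norm (cohen_ramanujan s r (int n)) \<le> real n * card {d. d > 0 \<and> d ^ s dvd n}"
proof -
  define D where "D = {d::nat. d > 0 \<and> d ^ s dvd n}"
  define G where "G m = (\<Sum>h\<in>{1..m^s}. exp (2 * pi * \<i> * of_int (int n) * of_nat h / of_nat (m ^ s)))" for m :: nat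
  have finD: "finite D"
  proof (rule finite_subset[of _ "{..n}"])
    show "D \<subseteq> {..n}"
    proof
      fix d assume "d \<in> D"
      then have "d > 0" "d ^ s dvd n" unfolding D_def by auto
      then have "d \<le> d ^ s" "d ^ s \<le> n" using s n by (auto simp: self_le_power dvd_imp_le)
      then show "d \<in> {..n}" by simp
    qed
  qed simp
  have hG: "G m = (\<Sum>d | d dvd m. cohen_ramanujan s d (int n))" if "m dvd r" for m
  proof -
    have "m > 0" using that r by (metis dvd_0_left_iff neq0_conv)
    then show ?thesis unfolding G_def by (rule sum_divisors_cr[OF s])
  qed
  have hB: "norm (G x) \<le> (if x \<in> D then real n else 0)" if x: "x > 0" for x
  proof -
    have "G x = (if int (x ^ s) dvd int n then of_nat (x ^ s) else 0)"
      unfolding G_def using x by (intro root_sum) simp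
    moreover have "int (x ^ s) dvd int n \<longleftrightarrow> x \<in> D" unfolding D_def using x by (metis (mono_tags, lifting) mem_Collect_eq of_nat_dvd_iff)
    moreover have "x ^ s \<le> n" if "x \<in> D" using that n unfolding D_def by (auto dest: dvd_imp_le)
    moreover have "norm (of_nat (x ^ s) :: complex) = real (x ^ s)" by (rule norm_of_nat)
    ultimately show ?thesis by (auto simp del: of_nat_power)
  qed
  have "norm (cohen_ramanujan s r (int n)) \<le> real n * card D"
    by (rule mobius_bound[OF r hG finD hB]) auto
  then show ?thesis unfolding D_def .
qed



lemma suminf_as_infsum:
  fixes g :: "nat \<Rightarrow> 'a::banach"
  assumes "summable (\<lambda>r. norm (g (Suc r)))"
  shows "(\<Sum>r. g (Suc r)) = infsum g {0<..}" "g summable_on {0<..}"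
proof -
  have rng: "range Suc = {0<..}"
  proof (intro equalityI subsetI)
    fix x :: nat assume "x \<in> {0<..}"
    then have "x = Suc (x - 1)" by simp
    then show "x \<in> range Suc" by (rule range_eqI)
  qed auto
  have "((\<lambda>r. g (Suc r)) has_sum (\<Sum>r. g (Suc r))) UNIV"
    using assms by (rule norm_summable_imp_has_sum[OF _ summable_sums[OF summable_norm_cancel[OF assms]]])
  then have h: "((g \<circ> Suc) has_sum (\<Sum>r. g (Suc r))) UNIV" by (simp add: o_def)
  have "infsum (g \<circ> Suc) UNIV = (\<Sum>r. g (Suc r))" using h by (rule infsumI)
  moreover have "(g \<circ> Suc) summable_on UNIV" using h by (rule has_sum_imp_summable)
  moreover have "infsum g (range Suc) = infsum (g \<circ> Suc) UNIV" by (rule infsum_reindex) simp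
  moreover have "g summable_on (range Suc) \<longleftrightarrow> (g \<circ> Suc) summable_on UNIV" by (rule summable_on_reindex) simp
  ultimately show "(\<Sum>r. g (Suc r)) = infsum g {0<..}" "g summable_on {0<..}"
    unfolding rng by simp_all
qed


theorem mainTheorem1:
  fixes s n :: nat
  assumes "s > 1" and "n > 0"
  shows "summable (\<lambda>r. norm (cohen_ramanujan s (Suc r) (int n) / of_nat (Suc r ^ s)))
    \<and> complex_of_real (real (tau_pow s n)) =
        complex_of_real (zeta_nat s) *
          (\<Sum>r. cohen_ramanujan s (Suc r) (int n) / of_nat (Suc r ^ s))"
proof -
  have s0: "s > 0" and s2: "s \<ge> 2" using assms by auto
  have n0: "n > 0" using assms by simp
  define P where "P = {0::nat<..}"
  define D where "D = {d::nat. d > 0 \<and> d ^ s dvd n}"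
  define C where "C = real n * card D"
  define a where "a m = cohen_ramanujan s m (int n) / of_nat (m ^ s)" for m
  define z where "z k = 1 / (of_nat (k ^ s) :: complex)" for k
  have C0: "C \<ge> 0" unfolding C_def by simp
  have abound: "norm (a m) \<le> C * (1 / real (m ^ s))" if "m > 0" for m
  proof -
    have "norm (a m) = norm (cohen_ramanujan s m (int n)) / real (m ^ s)"
      unfolding a_def by (simp add: norm_divide del: of_nat_power)
    also have "\<dots> \<le> C / real (m ^ s)"
      using cr_bound[OF s0 n0 that] unfolding C_def D_def by (intro divide_right_mono) auto
    finally show ?thesis by simp
  qed
  have inv_sum: "summable (\<lambda>r. 1 / real (Suc r ^ s))"
  proof -
    have "summable (\<lambda>r. inverse (real r ^ s))" by (rule inverse_power_summable[OF s2])
    then have "summable (\<lambda>r. inverse (real (Suc r) ^ s))" by (subst summable_Suc_iff)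
    then show ?thesis by (simp add: divide_inverse del: of_nat_Suc)
  qed
  have sumA: "summable (\<lambda>r. norm (a (Suc r)))"
  proof (rule summable_comparison_test[OF _ summable_mult[OF inv_sum, of C]])
    show "\<exists>N. \<forall>r\<ge>N. norm (norm (a (Suc r))) \<le> C * (1 / real (Suc r ^ s))"
    proof (intro exI allI impI)
      fix r :: nat
      show "norm (norm (a (Suc r))) \<le> C * (1 / real (Suc r ^ s))" using abound[of "Suc r"] by simp
    qed
  qed
  have sumZ: "summable (\<lambda>r. norm (z (Suc r)))"
  proof -
    have "norm (z (Suc r)) = 1 / real (Suc r ^ s)" for r
      unfolding z_def by (simp add: norm_divide del: of_nat_power of_nat_Suc)
    then show ?thesis using inv_sum by simp
  qed
  have A_eq: "(\<Sum>r. a (Suc r)) = infsum a P" and a_summ: "a summable_on P"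
    using suminf_as_infsum[OF sumA] unfolding P_def by auto
  have Z_eq: "(\<Sum>r. z (Suc r)) = infsum z P" and z_summ: "z summable_on P"
    using suminf_as_infsum[OF sumZ] unfolding P_def by auto
  have na_summ: "(\<lambda>m. norm (a m)) summable_on P"
  proof -
    have "summable (\<lambda>r. norm (norm (a (Suc r))))" using sumA by simp
    then show ?thesis using suminf_as_infsum(2)[of "\<lambda>m. norm (a m)"] unfolding P_def by simp
  qed
  have nz_summ: "(\<lambda>m. norm (z m)) summable_on P"
  proof -
    have "summable (\<lambda>r. norm (norm (z (Suc r))))" using sumZ by simp
    then show ?thesis using suminf_as_infsum(2)[of "\<lambda>m. norm (z m)"] unfolding P_def by simp
  qed
  have zeta_eq: "complex_of_real (zeta_nat s) = infsum z P"
  proof -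
    have "summable (\<lambda>k. 1 / real (Suc k) ^ s)" using inv_sum by simp
    then have "complex_of_real (zeta_nat s) = (\<Sum>k. complex_of_real (1 / real (Suc k) ^ s))"
      unfolding zeta_nat_def by (rule suminf_of_real)
    also have "\<dots> = (\<Sum>k. z (Suc k))" unfolding z_def by simp
    finally show ?thesis using Z_eq by simp
  qed
  define f where "f = (\<lambda>(k, m). z k * a m)"
  have f_abs: "(\<lambda>x. norm (f x)) summable_on (P \<times> P)"
  proof -
    have "(\<forall>k\<in>P. (\<lambda>m. norm (f (k, m))) summable_on P) \<and>
          ((\<lambda>k. norm (infsum (\<lambda>m. norm (f (k, m))) P)) summable_on P)"
    proof (intro conjI ballI)
      fix k assume "k \<in> P"
      show "(\<lambda>m. norm (f (k, m))) summable_on P"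
        unfolding f_def using summable_on_cmult_right[OF na_summ, of "norm (z k)"]
        by (simp add: norm_mult)
    next
      have "(\<lambda>k. norm (z k) * infsum (\<lambda>m. norm (a m)) P) summable_on P"
        by (rule summable_on_cmult_left[OF nz_summ])
      moreover have "infsum (\<lambda>m. norm (f (k, m))) P = norm (z k) * infsum (\<lambda>m. norm (a m)) P" for k
        unfolding f_def by (simp add: norm_mult infsum_cmult_right')
      moreover have "norm (norm (z k) * infsum (\<lambda>m. norm (a m)) P) = norm (z k) * infsum (\<lambda>m. norm (a m)) P" for k
        by (simp add: infsum_nonneg)
      ultimately show "(\<lambda>k. norm (infsum (\<lambda>m. norm (f (k, m))) P)) summable_on P" by simp
    qed
    then show ?thesis using Infinite_Sum.abs_summable_on_Sigma_iff[where f=f and A=P and B="\<lambda>_. P"] by blast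
  qed
  then have f_summ: "f summable_on (P \<times> P)" by (rule abs_summable_summable)
  have prod_eq: "infsum f (P \<times> P) = infsum z P * infsum a P"
  proof -
    have "infsum f (P \<times> P) = infsum (\<lambda>k. infsum (\<lambda>m. f (k, m)) P) P"
      using infsum_Sigma_banach[OF f_summ] by simp
    also have "\<dots> = infsum (\<lambda>k. z k * infsum a P) P"
      unfolding f_def by (simp add: infsum_cmult_right')
    also have "\<dots> = infsum z P * infsum a P" by (simp add: infsum_cmult_left')
    finally show ?thesis .
  qed
  define Q where "Q = Sigma P (\<lambda>r. {m. m dvd r})"
  define \<phi> where "\<phi> = (\<lambda>(r::nat, m::nat). (r div m, m))"
  define \<psi> where "\<psi> = (\<lambda>(k::nat, m::nat). (k * m, m))"
  define X where "X = infsum f (P \<times> P)"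
  have hasf: "(f has_sum X) (P \<times> P)" unfolding X_def using f_summ by simp
  have reidx: "(f has_sum X) (P \<times> P) = ((f \<circ> \<phi>) has_sum X) Q"
  proof (rule has_sum_reindex_bij_witness[where i=\<phi> and j=\<psi>])
    fix x assume "x \<in> P \<times> P"
    then obtain k m where x: "x = (k, m)" "k > 0" "m > 0" unfolding P_def by auto
    show "\<phi> (\<psi> x) = x" using x unfolding \<phi>_def \<psi>_def by simp
    show "\<psi> x \<in> Q" using x unfolding \<psi>_def Q_def P_def by simp
    show "(f \<circ> \<phi>) (\<psi> x) = f x" using x unfolding \<phi>_def \<psi>_def by simp
  next
    fix y assume "y \<in> Q"
    then obtain r m where y: "y = (r, m)" "r > 0" "m dvd r" unfolding Q_def P_def by auto
    have m0: "m > 0" using y by (metis dvd_0_left_iff neq0_conv)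
    have "m \<le> r" using y by (simp add: dvd_imp_le)
    then have "r div m > 0" using m0 by (simp add: div_greater_zero_iff)
    then show "\<phi> y \<in> P \<times> P" using y m0 unfolding \<phi>_def P_def by simp
    show "\<psi> (\<phi> y) = y" using y unfolding \<phi>_def \<psi>_def by simp
  qed simp
  have hasQ: "((f \<circ> \<phi>) has_sum X) (Sigma P (\<lambda>r. {m. m dvd r}))"
    using hasf reidx unfolding Q_def by simp
  define b where "b r = (\<Sum>m\<in>{m. m dvd r}. (f \<circ> \<phi>) (r, m))" for r
  have hasb: "(b has_sum X) P"
  proof (rule has_sum_Sigma'[OF hasQ])
    fix r assume "r \<in> P"
    then have "finite {m. m dvd r}" unfolding P_def by simp
    then show "((\<lambda>m. (f \<circ> \<phi>) (r, m)) has_sum b r) {m. m dvd r}"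
      unfolding b_def by (rule has_sum_finite)
  qed
  have bval: "b r = (if r \<in> D then 1 else 0)" if r: "r \<in> P" for r
  proof -
    have r0: "r > 0" using r unfolding P_def by simp
    have rs0: "(of_nat (r ^ s) :: complex) \<noteq> 0" using r0 by simp
    have term1: "(f \<circ> \<phi>) (r, m) = cohen_ramanujan s m (int n) / of_nat (r ^ s)" if m: "m dvd r" for m
    proof -
      have m0: "m > 0" using m r0 by (metis dvd_0_left_iff neq0_conv)
      have "r = (r div m) * m" using m by simp
      then have "r ^ s = (r div m) ^ s * m ^ s" by (metis power_mult_distrib)
      then have "(of_nat (r ^ s) :: complex) = of_nat ((r div m) ^ s) * of_nat (m ^ s)" by simp
      then show ?thesis unfolding \<phi>_def f_def z_def a_def by (simp del: of_nat_power)
    qed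
    have "b r = (\<Sum>m\<in>{m. m dvd r}. cohen_ramanujan s m (int n)) / of_nat (r ^ s)"
      unfolding b_def using term1 by (simp add: sum_divide_distrib)
    also have "(\<Sum>m\<in>{m. m dvd r}. cohen_ramanujan s m (int n))
        = (\<Sum>h\<in>{1..r^s}. exp (2 * pi * \<i> * of_int (int n) * of_nat h / of_nat (r ^ s)))"
      using sum_divisors_cr[OF s0 r0, of "int n"] by simp
    also have "\<dots> = (if int (r ^ s) dvd int n then of_nat (r ^ s) else 0)"
      using r0 by (intro root_sum) simp
    also have "int (r ^ s) dvd int n \<longleftrightarrow> r \<in> D" unfolding D_def using r0
      by (metis (mono_tags, lifting) mem_Collect_eq of_nat_dvd_iff)
    finally show ?thesis using rs0 by auto
  qed
  have DP: "D \<subseteq> P" unfolding D_def P_def by auto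
  have finD: "finite D"
  proof (rule finite_subset[of _ "{..n}"])
    show "D \<subseteq> {..n}"
    proof
      fix d assume "d \<in> D"
      then have "d > 0" "d ^ s dvd n" unfolding D_def by auto
      then have "d \<le> d ^ s" "d ^ s \<le> n" using s0 n0 by (auto simp: self_le_power dvd_imp_le)
      then show "d \<in> {..n}" by simp
    qed
  qed simp
  have "X = infsum b P" using hasb by (simp add: infsumI)
  also have "\<dots> = infsum (\<lambda>_. 1::complex) D"
    by (rule infsum_cong_neutral) (use DP bval in auto)
  also have "\<dots> = of_nat (card D)" using finD by simp
  finally have Xval: "X = of_nat (card D)" .
  have tau: "tau_pow s n = card D" unfolding tau_pow_def D_def by simp
  have "complex_of_real (real (tau_pow s n)) = X" using Xval tau by simp
  also have "X = infsum z P * infsum a P" unfolding X_def by (rule prod_eq)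
  also have "\<dots> = complex_of_real (zeta_nat s) * (\<Sum>r. a (Suc r))" using zeta_eq A_eq by simp
  finally have main: "complex_of_real (real (tau_pow s n)) = complex_of_real (zeta_nat s) * (\<Sum>r. a (Suc r))" .
  show ?thesis using sumA main unfolding a_def by simp
qed

end
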